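(* Let $\alpha\ge0$ and $2+2\alpha<p<2(2+\alpha)$, and define $\psi_{\alpha,p}(t)=t^{\frac{2+\alpha}{p}-1}(1-t)^{-\frac{2+\alpha}{p}}$ for $0<t<1$. Then the following statements are equivalent: (a) $B\left(\frac{2+\alpha}{p},1-\frac{2+\alpha}{p}\right)H_{\alpha,p}(0)-\int_0^1\psi_{\alpha,p}(t)K_{\alpha,p}(0,t)\,dt\le 0$; (b) $B\left(\frac{2+\alpha}{p},1-\frac{2+\alpha}{p}\right)\left[\frac12 B\left(\frac{p-2\alpha-2}{2},\alpha+1\right)-\frac{1}{2(\alpha+1)}\right]-\frac12\int_0^1\psi_{\alpha,p}(t)B_{t^4}\left(\frac{p-2\alpha-2}{2},\alpha+1\right)dt\le 0$; (c) $\int_0^1 I_t\left(\frac{2+\alpha}{p},1-\frac{2+\alpha}{p}\right)t^{2p-4\alpha-5}(1-t^4)^\alpha\,dt-\frac{1}{4(\alpha+1)}\le0$.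
   Context: $\binom{\alpha}{k}$ denotes the generalized binomial coefficient $\frac{\alpha(\alpha-1)\cdots(\alpha-k+1)}{k!}$, $\binom{\alpha}{0}=1$. For $\alpha\ge0$ and $2+2\alpha<p<2(2+\alpha)$ define $H_{\alpha,p}(s)=\sum_{k=0}^\infty\binom{\alpha}{k}(-1)^k\frac{1}{p-2\alpha-2+2k}-\frac{1}{2(\alpha+1)}(1-s^4)^{\alpha+1}$ for $0\le s\le1$, and $K_{\alpha,p}(s,t)=\sum_{k=0}^\infty\binom{\alpha}{k}(-1)^k\frac{1}{p-2\alpha-2+2k}\max\{s^2,t^2\}^{p-2\alpha-2+2k}$ for $0\le s\le1$, $0<t<1$. $B(x,y)=\int_0^1 s^{x-1}(1-s)^{y-1}ds$ is the Beta function, $B_t(x,y)=\int_0^t s^{x-1}(1-s)^{y-1}ds$ the incomplete Beta function, and $I_t(x,y)=B_t(x,y)/B(x,y)$. *)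

theory Defs
  imports "HOL-Analysis.Analysis"
begin

definition H_ap :: "real \<Rightarrow> real \<Rightarrow> real \<Rightarrow> real" where
  "H_ap \<alpha> p s =
     (\<Sum>k. (\<alpha> gchoose k) * (-1) ^ k * (1 / (p - 2*\<alpha> - 2 + 2 * real k)))
     - 1 / (2 * (\<alpha> + 1)) * (1 - s ^ 4) powr (\<alpha> + 1)"

definition K_ap :: "real \<Rightarrow> real \<Rightarrow> real \<Rightarrow> real \<Rightarrow> real" where
  "K_ap \<alpha> p s t =
     (\<Sum>k. (\<alpha> gchoose k) * (-1) ^ k * (1 / (p - 2*\<alpha> - 2 + 2 * real k))
            * (max (s\<^sup>2) (t\<^sup>2)) powr (p - 2*\<alpha> - 2 + 2 * real k))"

definition inc_Beta :: "real \<Rightarrow> real \<Rightarrow> real \<Rightarrow> real" where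
  "inc_Beta t x y = integral {0..t} (\<lambda>s. s powr (x - 1) * (1 - s) powr (y - 1))"

definition reg_inc_Beta :: "real \<Rightarrow> real \<Rightarrow> real \<Rightarrow> real" where
  "reg_inc_Beta t x y = inc_Beta t x y / Beta x y"

definition psi_ap :: "real \<Rightarrow> real \<Rightarrow> real \<Rightarrow> real" where
  "psi_ap \<alpha> p t = t powr ((2 + \<alpha>) / p - 1) * (1 - t) powr (- ((2 + \<alpha>) / p))"

end

theory Submission
  imports Defs
begin

lemma gch_rec: "real (Suc k) * (a gchoose Suc k) = (a - real k) * (a gchoose k)"
  using gbinomial_absorption[of k a] gbinomial_absorb_comp[of a k] by simp

lemma gch_dec:
  fixes a :: real assumes "a \<ge> 0" "real k \<ge> a"
  shows "real (Suc k) * \<bar>a gchoose Suc k\<bar> \<le> real k * \<bar>a gchoose k\<bar>"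
proof -
  have "real (Suc k) * \<bar>a gchoose Suc k\<bar> = \<bar>real (Suc k) * (a gchoose Suc k)\<bar>" by (simp add: abs_mult)
  also have "\<dots> = \<bar>(a - real k) * (a gchoose k)\<bar>" by (simp only: gch_rec)
  also have "\<dots> = \<bar>a - real k\<bar> * \<bar>a gchoose k\<bar>" by (simp add: abs_mult)
  also have "\<dots> \<le> real k * \<bar>a gchoose k\<bar>" using assms by (intro mult_right_mono) auto
  finally show ?thesis .
qed

lemma gch_bound:
  fixes a :: real assumes "a \<ge> 0"
  shows "\<exists>M. \<forall>k. real k * \<bar>a gchoose k\<bar> \<le> M"
proof -
  define N where "N = nat \<lceil>a\<rceil>"
  define M where "M = (\<Sum>k\<le>N. real k * \<bar>a gchoose k\<bar>)"
  have small: "real k * \<bar>a gchoose k\<bar> \<le> M" if "k \<le> N" for k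
    unfolding M_def using that by (intro member_le_sum) auto
  have "real (N + j) * \<bar>a gchoose (N + j)\<bar> \<le> M" for j
  proof (induction j)
    case 0 then show ?case using small by simp
  next
    case (Suc j)
    have "real (N+j) \<ge> a" unfolding N_def by linarith
    then have "real (Suc (N + j)) * \<bar>a gchoose Suc (N + j)\<bar> \<le> real (N+j) * \<bar>a gchoose (N+j)\<bar>"
      by (intro gch_dec assms)
    then show ?case using Suc by simp
  qed
  then have "real k * \<bar>a gchoose k\<bar> \<le> M" for k
    using small by (cases "k \<le> N") (metis le_add_diff_inverse nat_le_linear)+
  then show ?thesis by blast
qed

lemma coef_summable:
  fixes a g :: real assumes "a \<ge> 0" "g > 0"
  shows "summable (\<lambda>k. \<bar>a gchoose k\<bar> / (real k + g))"
proof -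
  obtain M where M: "\<And>k. real k * \<bar>a gchoose k\<bar> \<le> M" using gch_bound[OF assms(1)] by blast
  have "summable (\<lambda>n. M * inverse (real n ^ 2))"
    by (intro summable_mult inverse_power_summable) auto
  then show ?thesis
  proof (rule summable_comparison_test'[where N=1])
    fix n :: nat assume n: "1 \<le> n"
    have "norm (\<bar>a gchoose n\<bar> / (real n + g)) = \<bar>a gchoose n\<bar> / (real n + g)" using assms by simp
    also have "\<dots> \<le> \<bar>a gchoose n\<bar> / real n" using n assms
      by (intro divide_left_mono) auto
    also have "\<dots> = real n * \<bar>a gchoose n\<bar> / real n ^ 2" using n by (simp add: power2_eq_square)
    also have "\<dots> \<le> M / real n ^ 2" using M[of n] by (intro divide_right_mono) auto
    finally show "norm (\<bar>a gchoose n\<bar> / (real n + g)) \<le> M * inverse (real n ^ 2)" by (simp add: field_simps)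
  qed
qed

definition cf :: "real \<Rightarrow> real \<Rightarrow> nat \<Rightarrow> real" where
  "cf a g k = (a gchoose k) * (-1)^k / (real k + g)"
definition PP :: "real \<Rightarrow> real \<Rightarrow> real \<Rightarrow> real" where
  "PP a g v = (\<Sum>k. cf a g k * v^k)"
definition PPd :: "real \<Rightarrow> real \<Rightarrow> real \<Rightarrow> real" where
  "PPd a g v = (\<Sum>k. diffs (cf a g) k * v^k)"
definition Phi :: "real \<Rightarrow> real \<Rightarrow> real \<Rightarrow> real" where
  "Phi a g v = v powr g * PP a g v"

context fixes a g :: real assumes a: "a \<ge> 0" and g: "g > 0"
begin

lemma cf_abs_summable: "summable (\<lambda>k. \<bar>cf a g k\<bar>)"
proof -
  have "\<bar>cf a g k\<bar> = \<bar>a gchoose k\<bar> / (real k + g)" for k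
    using g by (simp add: cf_def abs_mult abs_divide)
  then show ?thesis using coef_summable[OF a g] by simp
qed

lemma cf_pow_bound: assumes "\<bar>v\<bar> \<le> 1" shows "norm (cf a g k * v^k) \<le> \<bar>cf a g k\<bar>"
proof -
  have "\<bar>v\<bar>^k \<le> 1" using assms by (intro power_le_one) auto
  then show ?thesis by (simp add: abs_mult power_abs mult_left_le)
qed

lemma cf_pow_summable: "\<bar>v\<bar> \<le> 1 \<Longrightarrow> summable (\<lambda>k. cf a g k * v^k)"
  by (rule summable_comparison_test[OF _ cf_abs_summable]) (use cf_pow_bound in auto)

lemma PP_cont: "continuous_on {-1..1} (PP a g)"
proof -
  have ul: "uniform_limit {-1..1} (\<lambda>n x. \<Sum>i<n. cf a g i * x^i) (\<lambda>x. suminf (\<lambda>i. cf a g i * x^i)) sequentially"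
    by (rule Weierstrass_m_test[OF _ cf_abs_summable], rule cf_pow_bound) auto
  show ?thesis unfolding PP_def
    by (rule uniform_limit_theorem[OF _ ul]) (auto intro!: always_eventually continuous_intros)
qed

lemma PP_deriv: "\<bar>v\<bar> < 1 \<Longrightarrow> (PP a g has_real_derivative PPd a g v) (at v)"
  unfolding PP_def PPd_def
  by (rule termdiffs_strong[where K=1]) (use cf_pow_summable[of 1] in auto)

lemma PP_key:
  assumes v: "\<bar>v\<bar> < 1"
  shows "g * PP a g v + v * PPd a g v = (1 - v) powr a"
proof -
  have s1: "(\<lambda>k. cf a g k * v^k) sums PP a g v" unfolding PP_def
    using cf_pow_summable v by (intro summable_sums) auto
  have "summable (\<lambda>k. diffs (cf a g) k * v^k)"
    by (rule termdiff_converges[where K=1]) (use cf_pow_summable v in auto)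
  then have s2: "(\<lambda>k. diffs (cf a g) k * v^k) sums PPd a g v" unfolding PPd_def
    by (intro summable_sums)
  define A where "A = (\<lambda>k. real k * cf a g k * v^k)"
  have eA: "(\<lambda>n. v * (diffs (cf a g) n * v^n)) = (\<lambda>k. A (Suc k))"
  proof
    fix n
    show "v * (diffs (cf a g) n * v^n) = A (Suc n)"
      unfolding A_def diffs_def power_Suc by (simp only: mult_ac)
  qed
  have "(\<lambda>k. A (Suc k)) sums (v * PPd a g v)"
    using sums_mult[OF s2, of v] unfolding eA .
  then have s3: "A sums (v * PPd a g v)" by (subst (asm) sums_Suc_iff) (simp add: A_def)
  have "(\<lambda>k. g * (cf a g k * v^k) + A k) sums (g * PP a g v + v * PPd a g v)"
    by (intro sums_add sums_mult s1 s3)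
  moreover have "(\<lambda>k. g * (cf a g k * v^k) + A k) = (\<lambda>k. (a gchoose k) * (-v)^k)"
  proof
    fix k
    have "real k + g > 0" using g by simp
    then have e: "(real k + g) * cf a g k = (a gchoose k) * (-1)^k" by (simp add: cf_def)
    have "g * (cf a g k * v^k) + A k = (g + real k) * (cf a g k * v^k)" unfolding A_def by (simp only: distrib_right mult.assoc)
    also have "\<dots> = ((real k + g) * cf a g k) * v^k" by (metis add.commute mult.assoc)
    also have "\<dots> = (a gchoose k) * (-v)^k" by (simp only: e power_minus[of v k] mult.assoc)
    finally show "g * (cf a g k * v^k) + A k = (a gchoose k) * (-v)^k" .
  qed
  ultimately have "(\<lambda>k. (a gchoose k) * (-v)^k) sums (g * PP a g v + v * PPd a g v)" by simp
  moreover have "(\<lambda>k. (a gchoose k) * (-v)^k) sums (1 + (-v)) powr a"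
    by (rule gen_binomial_real) (use v in simp)
  ultimately show ?thesis using sums_unique2 by force
qed

lemma Phi_deriv:
  assumes v: "0 < v" "v < 1"
  shows "(Phi a g has_real_derivative v powr (g-1) * (1-v) powr a) (at v)"
proof -
  have d: "((\<lambda>v. v powr g * PP a g v) has_real_derivative
            (v powr g * PPd a g v + g * v powr (g - 1) * PP a g v)) (at v)"
    by (rule DERIV_mult'[OF has_real_derivative_powr PP_deriv]) (use v in auto)
  have "v powr g = v powr (g-1) * v" using v by (simp add: powr_diff)
  then have "v powr g * PPd a g v + g * v powr (g - 1) * PP a g v
           = v powr (g-1) * (g * PP a g v + v * PPd a g v)" by (simp add: algebra_simps)
  also have "\<dots> = v powr (g-1) * (1-v) powr a" using PP_key[of v] v by simp
  finally show ?thesis using d unfolding Phi_def[abs_def] by simp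
qed

lemma Phi_cont: "continuous_on {0..1} (Phi a g)"
proof -
  have "continuous_on {0..1} (PP a g)" by (rule continuous_on_subset[OF PP_cont]) auto
  moreover have "continuous_on {0..1} (\<lambda>v::real. v powr g)"
    by (rule continuous_on_powr') (use g in \<open>auto intro: continuous_intros\<close>)
  ultimately show ?thesis unfolding Phi_def[abs_def] by (intro continuous_on_mult)
qed

lemma Phi0: "Phi a g 0 = 0" by (simp add: Phi_def)

lemma Phi_int:
  assumes "0 \<le> x" "x \<le> 1"
  shows "((\<lambda>s. s powr (g-1) * (1-s) powr a) has_integral Phi a g x) {0..x}"
proof -
  have "((\<lambda>s. s powr (g-1) * (1-s) powr a) has_integral Phi a g x - Phi a g 0) {0..x}"
  proof (rule fundamental_theorem_of_calculus_interior)
    show "continuous_on {0..x} (Phi a g)" by (rule continuous_on_subset[OF Phi_cont]) (use assms in auto)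
  next
    fix y assume "y \<in> {0<..<x}"
    then show "(Phi a g has_vector_derivative y powr (g - 1) * (1 - y) powr a) (at y)"
      using assms Phi_deriv[of y] by (simp add: has_real_derivative_iff_has_vector_derivative)
  qed (use assms in auto)
  then show ?thesis by (simp add: Phi0)
qed

lemma Beta_Phi: "Beta g (a+1) = Phi a g 1"
proof -
  have "((\<lambda>s. s powr (g-1) * (1-s) powr (a + 1 - 1)) has_integral Beta g (a+1)) {0..1}"
    by (rule has_integral_Beta_real) (use a g in auto)
  then have "((\<lambda>s. s powr (g-1) * (1-s) powr a) has_integral Beta g (a+1)) {0..1}" by simp
  then show ?thesis using Phi_int[of 1] has_integral_unique by auto
qed

lemma Phi1: "Phi a g 1 = (\<Sum>k. cf a g k)"
  by (simp add: Phi_def PP_def)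

end

lemma pw_lem:
  fixes t g :: real assumes "t > 0"
  shows "(t^2) powr (2*(real k + g)) = (t^4) powr g * (t^4)^k"
proof -
  have l2: "ln (t^2) = 2 * ln t" and l4: "ln (t^4) = 4 * ln t" using assms by (simp_all add: ln_realpow)
  have "(t^2) powr (2*(real k + g)) = exp (2*(real k + g) * ln (t^2))" using assms by (simp add: powr_def)
  also have "\<dots> = exp ((g + real k) * ln (t^4))" unfolding l2 l4 by (simp add: algebra_simps)
  also have "\<dots> = (t^4) powr (g + real k)" using assms by (simp add: powr_def)
  also have "\<dots> = (t^4) powr g * (t^4) powr real k" by (simp add: powr_add)
  also have "\<dots> = (t^4) powr g * (t^4)^k" using assms by (simp add: powr_realpow)
  finally show ?thesis .
qed

lemma pw_lem2:
  fixes t g :: real assumes "t > 0"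
  shows "t^3 * (t^4) powr (g - 1) = t powr (4*g - 1)"
proof -
  have "(t^4) powr (g - 1) = (t powr 4) powr (g - 1)" using assms by (simp add: powr_realpow)
  also have "\<dots> = t powr (4*g - 4)" by (simp add: powr_powr algebra_simps)
  finally have "t^3 * (t^4) powr (g - 1) = t powr 3 * t powr (4*g - 4)" using assms by (simp add: powr_realpow)
  also have "\<dots> = t powr (4*g - 1)" by (simp add: powr_add[symmetric])
  finally show ?thesis .
qed

definition Ff :: "real \<Rightarrow> real \<Rightarrow> real \<Rightarrow> real" where
  "Ff al p t = integral {0..t} (psi_ap al p)"
definition gm :: "real \<Rightarrow> real \<Rightarrow> real" where
  "gm al p = (p - 2*al - 2) / 2"
definition Gf :: "real \<Rightarrow> real \<Rightarrow> real \<Rightarrow> real" where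
  "Gf al p t = Phi al (gm al p) (t^4) / 2"
definition gf :: "real \<Rightarrow> real \<Rightarrow> real \<Rightarrow> real" where
  "gf al p t = 2 * t^3 * (t^4) powr (gm al p - 1) * (1 - t^4) powr al"

context fixes al p :: real
  assumes al: "al \<ge> 0" and p1: "2 + 2*al < p" and p2: "p < 2 * (2 + al)"
begin

lemma pp: "p > 0" "(2+al)/p > 0" "(2+al)/p < 1" "gm al p > 0"
proof -
  show "p > 0" using al p1 by linarith
  then show "(2+al)/p > 0" using al by simp
  show "(2+al)/p < 1" using al p1 \<open>p > 0\<close> by simp
  show "gm al p > 0" using p1 by (simp add: gm_def)
qed

lemma psi_eq: "(\<lambda>t. t powr ((2+al)/p - 1) * (1-t) powr (1 - (2+al)/p - 1)) = psi_ap al p"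
  by (simp add: psi_ap_def fun_eq_iff)

lemma psi_int: "(psi_ap al p has_integral Beta ((2+al)/p) (1 - (2+al)/p)) {0..1}"
  using has_integral_Beta_real[of "(2+al)/p" "1 - (2+al)/p"] pp unfolding psi_eq by simp

lemma Bpos: "Beta ((2+al)/p) (1 - (2+al)/p) > 0"
  using pp by (simp add: Beta_def Gamma_real_pos)

lemma incB_F: "inc_Beta t ((2+al)/p) (1 - (2+al)/p) = Ff al p t"
  unfolding inc_Beta_def Ff_def psi_eq ..

lemma psi_integrable: "psi_ap al p integrable_on {0..1}"
  using psi_int by blast

lemma F_cont: "continuous_on {0..1} (Ff al p)"
  unfolding Ff_def[abs_def] by (rule indefinite_integral_continuous_1[OF psi_integrable])

lemma F_deriv:
  assumes t: "0 < t" "t < 1"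
  shows "(Ff al p has_real_derivative psi_ap al p t) (at t)"
proof -
  define c where "c = t/2"
  define d where "d = (1+t)/2"
  have cd: "0 < c" "c < t" "t < d" "d < 1" using t by (auto simp: c_def d_def)
  have cont: "continuous_on {c..d} (psi_ap al p)"
    unfolding psi_ap_def using cd by (intro continuous_intros) auto
  have "((\<lambda>x. integral {c..x} (psi_ap al p)) has_real_derivative psi_ap al p t) (at t within {c..d})"
    by (rule integral_has_real_derivative[OF cont]) (use cd in auto)
  then have "((\<lambda>x. integral {c..x} (psi_ap al p)) has_real_derivative psi_ap al p t) (at t within {c<..<d})"
    by (rule DERIV_subset) auto
  moreover have eq: "at t within {c<..<d} = at t" using cd by (intro at_within_open) auto
  ultimately have h: "((\<lambda>x. integral {c..x} (psi_ap al p)) has_real_derivative psi_ap al p t) (at t)"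
    by simp
  have h2: "((\<lambda>x. integral {0..c} (psi_ap al p) + integral {c..x} (psi_ap al p)) has_real_derivative psi_ap al p t) (at t)"
    using DERIV_add[OF DERIV_const h] by (simp only: add_0_left)
  show ?thesis
  proof (rule has_field_derivative_transform_within_open[OF h2, of "{c<..<d}"])
    fix x assume x: "x \<in> {c<..<d}"
    have ix: "psi_ap al p integrable_on {0..x}"
      by (rule integrable_on_subinterval[OF psi_integrable]) (use x cd in auto)
    show "integral {0..c} (psi_ap al p) + integral {c..x} (psi_ap al p) = Ff al p x"
      unfolding Ff_def by (rule Henstock_Kurzweil_Integration.integral_combine) (use x cd ix in auto)
  qed (use cd in auto)
qed

lemma G_cont: "continuous_on {0..1} (Gf al p)"
proof -
  have "continuous_on {0..1} (\<lambda>t. Phi al (gm al p) (t^4))"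
  proof (rule continuous_on_compose2[OF Phi_cont[OF al pp(4)]])
    show "continuous_on {0..1} (\<lambda>t::real. t^4)" by (intro continuous_intros)
    show "(\<lambda>t::real. t^4) ` {0..1} \<subseteq> {0..1}" by (auto intro: power_le_one)
  qed
  then show ?thesis unfolding Gf_def[abs_def] by (intro continuous_intros) auto
qed

lemma G_deriv:
  assumes t: "0 < t" "t < 1"
  shows "(Gf al p has_real_derivative gf al p t) (at t)"
proof -
  have t4: "0 < t^4" "t^4 < 1" using t by (auto simp: power_less_one_iff)
  have dp: "((\<lambda>t. t^4) has_real_derivative real 4 * t^(4-1)) (at t)"
    using DERIV_pow[of 4 t] by simp
  have "((\<lambda>t. Phi al (gm al p) (t^4)) has_real_derivative
         ((t^4) powr (gm al p - 1) * (1 - t^4) powr al) * (real 4 * t^(4-1))) (at t)"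
    by (rule DERIV_chain2[OF Phi_deriv[OF al pp(4) t4] dp])
  then have "((\<lambda>t. Phi al (gm al p) (t^4) / 2) has_real_derivative
         ((t^4) powr (gm al p - 1) * (1 - t^4) powr al) * (real 4 * t^(4-1)) / 2) (at t)"
    by (rule DERIV_cdivide)
  moreover have "((t^4) powr (gm al p - 1) * (1 - t^4) powr al) * (real 4 * t^(4-1)) / 2 = gf al p t"
    by (simp add: gf_def)
  ultimately show ?thesis unfolding Gf_def[abs_def] by simp
qed

lemma G0: "Gf al p 0 = 0" by (simp add: Gf_def Phi0[OF al pp(4)])

lemma F1: "Ff al p 1 = Beta ((2+al)/p) (1 - (2+al)/p)"
  unfolding Ff_def using psi_int by (rule integral_unique)

lemma g_nonneg: "0 \<le> t \<Longrightarrow> 0 \<le> gf al p t"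
  by (simp add: gf_def)

lemma g_int: "(gf al p has_integral (Gf al p 1 - Gf al p 0)) {0..1}"
proof (rule fundamental_theorem_of_calculus_interior)
  fix t :: real assume "t \<in> {0<..<1}"
  then show "(Gf al p has_vector_derivative gf al p t) (at t)"
    using G_deriv[of t] by (simp add: has_real_derivative_iff_has_vector_derivative)
qed (use G_cont in auto)

lemma Fg_integrable: "(\<lambda>t. Ff al p t * gf al p t) integrable_on {0..1}"
proof -
  have "(\<lambda>t. Ff al p t * gf al p t) absolutely_integrable_on {0..1}"
  proof (rule absolutely_integrable_bounded_measurable_product_real)
    show "Ff al p \<in> borel_measurable (lebesgue_on {0..1})"
      by (rule continuous_imp_measurable_on_sets_lebesgue[OF F_cont]) simp
    show "bounded (Ff al p ` {0..1})"
      by (rule compact_imp_bounded[OF compact_continuous_image[OF F_cont]]) simp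
    show "gf al p absolutely_integrable_on {0..1}"
      by (rule nonnegative_absolutely_integrable_1) (use g_int g_nonneg in auto)
  qed simp
  then show ?thesis by (rule set_lebesgue_integral_eq_integral(1))
qed

lemma IBP: "((\<lambda>t. psi_ap al p t * Gf al p t + Ff al p t * gf al p t) has_integral
              (Ff al p 1 * Gf al p 1 - Ff al p 0 * Gf al p 0)) {0..1}"
proof (rule fundamental_theorem_of_calculus_interior[where f="\<lambda>t. Ff al p t * Gf al p t"])
  show "continuous_on {0..1} (\<lambda>t. Ff al p t * Gf al p t)"
    by (intro continuous_on_mult F_cont G_cont)
next
  fix t :: real assume t: "t \<in> {0<..<1}"
  have "((\<lambda>t. Ff al p t * Gf al p t) has_real_derivative
          Ff al p t * gf al p t + psi_ap al p t * Gf al p t) (at t)"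
    by (rule DERIV_mult'[OF F_deriv G_deriv]) (use t in auto)
  then show "((\<lambda>t. Ff al p t * Gf al p t) has_vector_derivative
          psi_ap al p t * Gf al p t + Ff al p t * gf al p t) (at t)"
    by (simp add: has_real_derivative_iff_has_vector_derivative add.commute)
qed simp

lemma psiG: "integral {0..1} (\<lambda>t. psi_ap al p t * Gf al p t)
   = Beta ((2+al)/p) (1 - (2+al)/p) * Gf al p 1 - integral {0..1} (\<lambda>t. Ff al p t * gf al p t)"
proof -
  have e: "(\<lambda>t. psi_ap al p t * Gf al p t) = (\<lambda>t. (psi_ap al p t * Gf al p t + Ff al p t * gf al p t) - Ff al p t * gf al p t)"
    by simp
  have "integral {0..1} (\<lambda>t. (psi_ap al p t * Gf al p t + Ff al p t * gf al p t) - Ff al p t * gf al p t)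
      = integral {0..1} (\<lambda>t. psi_ap al p t * Gf al p t + Ff al p t * gf al p t) - integral {0..1} (\<lambda>t. Ff al p t * gf al p t)"
    by (rule integral_diff[OF has_integral_integrable[OF IBP] Fg_integrable])
  also have "integral {0..1} (\<lambda>t. psi_ap al p t * Gf al p t + Ff al p t * gf al p t)
      = Beta ((2+al)/p) (1 - (2+al)/p) * Gf al p 1"
    using integral_unique[OF IBP] by (simp add: G0 F1)
  finally show ?thesis unfolding e .
qed

lemma K_eq:
  assumes t: "0 < t" "t < 1"
  shows "K_ap al p 0 t = Gf al p t"
proof -
  define g where "g = gm al p"
  have g: "g > 0" using pp by (simp add: g_def)
  have t4: "\<bar>t^4\<bar> \<le> 1" using t by (simp add: power_le_one)
  have trm: "(al gchoose k) * (-1) ^ k * (1 / (p - 2*al - 2 + 2 * real k))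
            * (max (0\<^sup>2) (t\<^sup>2)) powr (p - 2*al - 2 + 2 * real k)
         = (1/2 * (t^4) powr g) * (cf al g k * (t^4)^k)" for k
  proof -
    have e1: "p - 2*al - 2 + 2 * real k = 2 * (real k + g)" by (simp add: g_def gm_def)
    have kg: "real k + g > 0" using g by simp
    have "max (0\<^sup>2) (t\<^sup>2) = t^2" by simp
    then have "(al gchoose k) * (-1) ^ k * (1 / (p - 2*al - 2 + 2 * real k))
            * (max (0\<^sup>2) (t\<^sup>2)) powr (p - 2*al - 2 + 2 * real k)
          = (al gchoose k) * (-1) ^ k * (1 / (2 * (real k + g))) * ((t^4) powr g * (t^4)^k)"
      unfolding e1 using pw_lem[OF t(1)] by simp
    also have "\<dots> = (1/2 * (t^4) powr g) * (cf al g k * (t^4)^k)"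
      using kg by (simp add: cf_def)
    finally show ?thesis .
  qed
  have "K_ap al p 0 t = (\<Sum>k. (1/2 * (t^4) powr g) * (cf al g k * (t^4)^k))"
    unfolding K_ap_def trm ..
  also have "\<dots> = (1/2 * (t^4) powr g) * (\<Sum>k. cf al g k * (t^4)^k)"
    by (rule suminf_mult[OF cf_pow_summable[OF al g t4]])
  also have "\<dots> = Gf al p t" by (simp add: Gf_def Phi_def PP_def g_def)
  finally show ?thesis .
qed

lemma S_eq: "(\<Sum>k. (al gchoose k) * (-1) ^ k * (1 / (p - 2*al - 2 + 2 * real k)))
   = Phi al (gm al p) 1 / 2"
proof -
  define g where "g = gm al p"
  have g: "g > 0" using pp by (simp add: g_def)
  have trm: "(al gchoose k) * (-1) ^ k * (1 / (p - 2*al - 2 + 2 * real k)) = cf al g k / 2" for k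
  proof -
    have e1: "p - 2*al - 2 + 2 * real k = 2 * (real k + g)" by (simp add: g_def gm_def)
    show ?thesis unfolding e1 by (simp add: cf_def)
  qed
  have sm: "summable (cf al g)" using summable_rabs_cancel[OF cf_abs_summable[OF al g]] .
  show ?thesis unfolding trm using suminf_divide[OF sm, of 2] Phi1[OF al g] by (simp add: g_def)
qed

end

theorem lemma3p2:
  fixes \<alpha> p :: real
  assumes "\<alpha> \<ge> 0" and "2 + 2*\<alpha> < p" and "p < 2 * (2 + \<alpha>)"
  shows "(Beta ((2 + \<alpha>) / p) (1 - (2 + \<alpha>) / p) * H_ap \<alpha> p 0
            - integral {0<..<1} (\<lambda>t. psi_ap \<alpha> p t * K_ap \<alpha> p 0 t) \<le> 0
          \<longleftrightarrow>
          Beta ((2 + \<alpha>) / p) (1 - (2 + \<alpha>) / p)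
              * (1/2 * Beta ((p - 2*\<alpha> - 2) / 2) (\<alpha> + 1) - 1 / (2 * (\<alpha> + 1)))
            - 1/2 * integral {0<..<1}
                (\<lambda>t. psi_ap \<alpha> p t * inc_Beta (t ^ 4) ((p - 2*\<alpha> - 2) / 2) (\<alpha> + 1)) \<le> 0)
       \<and> (Beta ((2 + \<alpha>) / p) (1 - (2 + \<alpha>) / p) * H_ap \<alpha> p 0
            - integral {0<..<1} (\<lambda>t. psi_ap \<alpha> p t * K_ap \<alpha> p 0 t) \<le> 0
          \<longleftrightarrow>
          integral {0<..<1}
              (\<lambda>t. reg_inc_Beta t ((2 + \<alpha>) / p) (1 - (2 + \<alpha>) / p)
                     * t powr (2*p - 4*\<alpha> - 5) * (1 - t ^ 4) powr \<alpha>)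
            - 1 / (4 * (\<alpha> + 1)) \<le> 0)"
proof -
  note A = assms
  define B where "B = Beta ((2 + \<alpha>) / p) (1 - (2 + \<alpha>) / p)"
  define g where "g = gm \<alpha> p"
  define P1 where "P1 = Phi \<alpha> g 1"
  define I where "I = integral {0..1} (\<lambda>t. Ff \<alpha> p t * gf \<alpha> p t)"
  define J where "J = integral {0..1} (\<lambda>t. psi_ap \<alpha> p t * Gf \<alpha> p t)"
  have Bp: "B > 0" unfolding B_def by (rule Bpos[OF A])
  have gp: "g > 0" unfolding g_def using pp[OF A] by simp
  have hJ: "J = B * (P1 / 2) - I"
    unfolding J_def I_def B_def P1_def g_def psiG[OF A] by (simp add: Gf_def)
  have hH: "H_ap \<alpha> p 0 = P1 / 2 - 1 / (2 * (\<alpha> + 1))"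
    unfolding H_ap_def S_eq[OF A] P1_def g_def by simp
  have hK: "integral {0<..<1} (\<lambda>t. psi_ap \<alpha> p t * K_ap \<alpha> p 0 t) = J"
  proof -
    have "integral {0<..<1} (\<lambda>t. psi_ap \<alpha> p t * K_ap \<alpha> p 0 t)
        = integral {0<..<1} (\<lambda>t. psi_ap \<alpha> p t * Gf \<alpha> p t)"
      by (rule integral_cong) (simp add: K_eq[OF A])
    then show ?thesis unfolding J_def integral_open_interval_real by simp
  qed
  have hb: "integral {0<..<1} (\<lambda>t. psi_ap \<alpha> p t * inc_Beta (t ^ 4) ((p - 2*\<alpha> - 2) / 2) (\<alpha> + 1)) = 2 * J"
  proof -
    have "integral {0<..<1} (\<lambda>t. psi_ap \<alpha> p t * inc_Beta (t ^ 4) ((p - 2*\<alpha> - 2) / 2) (\<alpha> + 1))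
        = integral {0<..<1} (\<lambda>t. 2 * (psi_ap \<alpha> p t * Gf \<alpha> p t))"
    proof (rule integral_cong)
      fix t :: real assume t: "t \<in> {0<..<1}"
      have t4: "0 \<le> t^4" "t^4 \<le> 1" using t by (auto simp: power_le_one)
      have "((\<lambda>s. s powr (g - 1) * (1 - s) powr \<alpha>) has_integral Phi \<alpha> g (t^4)) {0..t^4}"
        by (rule Phi_int[OF A(1) gp t4])
      then have "inc_Beta (t ^ 4) g (\<alpha> + 1) = Phi \<alpha> g (t^4)"
        unfolding inc_Beta_def by (simp add: integral_unique)
      then show "psi_ap \<alpha> p t * inc_Beta (t ^ 4) ((p - 2*\<alpha> - 2) / 2) (\<alpha> + 1) = 2 * (psi_ap \<alpha> p t * Gf \<alpha> p t)"
        by (simp add: g_def gm_def Gf_def)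
    qed
    then show ?thesis unfolding J_def integral_open_interval_real by simp
  qed
  have hB2: "Beta ((p - 2*\<alpha> - 2) / 2) (\<alpha> + 1) = P1"
    using Beta_Phi[OF A(1) gp] unfolding P1_def g_def gm_def by simp
  have hc: "integral {0<..<1}
              (\<lambda>t. reg_inc_Beta t ((2 + \<alpha>) / p) (1 - (2 + \<alpha>) / p)
                     * t powr (2*p - 4*\<alpha> - 5) * (1 - t ^ 4) powr \<alpha>) = I / (2 * B)"
  proof -
    have "integral {0<..<1}
              (\<lambda>t. reg_inc_Beta t ((2 + \<alpha>) / p) (1 - (2 + \<alpha>) / p)
                     * t powr (2*p - 4*\<alpha> - 5) * (1 - t ^ 4) powr \<alpha>)
        = integral {0<..<1} (\<lambda>t. Ff \<alpha> p t * gf \<alpha> p t / (2 * B))"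
    proof (rule integral_cong)
      fix t :: real assume t: "t \<in> {0<..<1}"
      have e: "4 * g - 1 = 2*p - 4*\<alpha> - 5" by (simp add: g_def gm_def field_simps)
      have "gf \<alpha> p t = 2 * t powr (2*p - 4*\<alpha> - 5) * (1 - t^4) powr \<alpha>"
        using pw_lem2[of t g] t unfolding gf_def e[symmetric] g_def by simp
      then show "reg_inc_Beta t ((2 + \<alpha>) / p) (1 - (2 + \<alpha>) / p)
                     * t powr (2*p - 4*\<alpha> - 5) * (1 - t ^ 4) powr \<alpha> = Ff \<alpha> p t * gf \<alpha> p t / (2 * B)"
        using Bp unfolding reg_inc_Beta_def incB_F[OF A] B_def by simp
    qed
    then show ?thesis unfolding I_def integral_open_interval_real by simp
  qed
  have E1: "B * H_ap \<alpha> p 0 - integral {0<..<1} (\<lambda>t. psi_ap \<alpha> p t * K_ap \<alpha> p 0 t) = I - B / (2 * (\<alpha> + 1))"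
    unfolding hH hK hJ by (simp add: algebra_simps)
  have E2: "B * (1/2 * Beta ((p - 2*\<alpha> - 2) / 2) (\<alpha> + 1) - 1 / (2 * (\<alpha> + 1)))
            - 1/2 * integral {0<..<1}
                (\<lambda>t. psi_ap \<alpha> p t * inc_Beta (t ^ 4) ((p - 2*\<alpha> - 2) / 2) (\<alpha> + 1)) = I - B / (2 * (\<alpha> + 1))"
    unfolding hb hB2 hJ by (simp add: algebra_simps)
  have E3: "I - B / (2 * (\<alpha> + 1)) = (2 * B) * (I / (2 * B) - 1 / (4 * (\<alpha> + 1)))"
  proof -
    have a1: "\<alpha> + 1 > 0" using A(1) by simp
    have x1: "(2*B)*(I/(2*B)) = I" using Bp by simp
    have x2: "(2*B)*(1/(4*(\<alpha>+1))) = B/(2*(\<alpha>+1))" using a1 by (simp add: divide_simps)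
    show ?thesis unfolding right_diff_distrib x1 x2 ..
  qed
  have E4: "I - B / (2 * (\<alpha> + 1)) \<le> 0 \<longleftrightarrow> I / (2 * B) - 1 / (4 * (\<alpha> + 1)) \<le> 0"
    unfolding E3 using Bp by (simp add: mult_le_0_iff)
  show ?thesis unfolding B_def[symmetric] E1 E2 hc E4 by simp
qed

end
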